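(* Fix $x_0\in\mathbb{R}^d$ and assume (K) and (G). Then for every $x\in\mathbb{R}^d$, every $\delta>0$ and every $T>0$ there exists a control $\eta_{x,\delta,T}\in C^1_0([0,T];\mathbb{R}^n)$ such that $S^F_T(x,\eta_{x,\delta,T})\in B(x_0,\tfrac12\delta)$.
   Context: Let $d,n$ be positive integers with $n\le d$, $A:\mathbb{R}^d\to\mathbb{R}^d$, $B:\mathbb{R}^n\to\mathbb{R}^d$ linear, $F:\mathbb{R}^d\to\mathbb{R}^d$ smooth and globally Lipschitz. $C^k_0([0,T];\mathbb{R}^n)$ is the space of $k$ times continuously differentiable $\eta:[0,T]\to\mathbb{R}^n$ with $\eta(0)=0$ ($C_0$ for $k=0$). For $\eta\in C_0([0,T];\mathbb{R}^n)$ and $0\le t\le T$, $S^F_t(x,\eta)$ is the value at time $t$ of the solution of $y(t)=x+\int_0^t (Ay(s)+F(y(s)))\,\mathrm{d}s + B\eta(t)$ (i.e. $\dot y = Ay+F(y)+B\dot\eta$, $y(0)=x$). $B(x_0,r)$ is the open Euclidean ball. Let $e_1,\dots,e_n$ be the standard basis of $\mathbb{R}^n$. (K) the columns of $B, AB, A^2B,\dots$ span $\mathbb{R}^d$; $d_*$ denotes the smallest positive integer such that $\operatorname{span}\{A^jBe_i: 0\le j\le d_*-1,\ 1\le i\le n\}=\mathbb{R}^d$. (G) there is $a\in[0,\frac{1}{2d_*})$ with $\sup_{x}|F(x)|/(1+|x|)^a<\infty$. *)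

theory Defs
  imports "HOL-Analysis.Analysis"
begin

text \<open>Infinitely (Frechet) differentiable maps: G k x vs is the k-th derivative of f at x
  applied to the directions vs (a list of length k).\<close>
definition smooth_map :: "(real^'d \<Rightarrow> real^'e) \<Rightarrow> bool" where
  "smooth_map f \<longleftrightarrow> (\<exists>G :: nat \<Rightarrow> real^'d \<Rightarrow> (real^'d) list \<Rightarrow> real^'e.
     (\<forall>x. G 0 x [] = f x) \<and>
     (\<forall>k x vs. length vs = k \<longrightarrow>
        ((\<lambda>y. G k y vs) has_derivative (\<lambda>v. G (Suc k) x (v # vs))) (at x)))"

definition globally_lipschitz :: "(real^'d \<Rightarrow> real^'e) \<Rightarrow> bool" where
  "globally_lipschitz f \<longleftrightarrow> (\<exists>L. L-lipschitz_on UNIV f)"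

definition kalman_span :: "(real^'d \<Rightarrow> real^'d) \<Rightarrow> (real^'n \<Rightarrow> real^'d) \<Rightarrow> nat \<Rightarrow> (real^'d) set" where
  "kalman_span A B m = span {(A ^^ j) (B (axis i 1)) | j i. j < m}"

definition kalman_condition :: "(real^'d \<Rightarrow> real^'d) \<Rightarrow> (real^'n \<Rightarrow> real^'d) \<Rightarrow> bool" where
  "kalman_condition A B \<longleftrightarrow> span {(A ^^ j) (B (axis i 1)) | j i. True} = UNIV"

definition dstar :: "(real^'d \<Rightarrow> real^'d) \<Rightarrow> (real^'n \<Rightarrow> real^'d) \<Rightarrow> nat" where
  "dstar A B = (LEAST m. 0 < m \<and> kalman_span A B m = UNIV)"

definition growth_condition :: "(real^'d \<Rightarrow> real^'d) \<Rightarrow> (real^'n \<Rightarrow> real^'d) \<Rightarrow> (real^'d \<Rightarrow> real^'d) \<Rightarrow> bool" where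
  "growth_condition A B F \<longleftrightarrow> (\<exists>a::real. 0 \<le> a \<and> a < 1 / (2 * real (dstar A B)) \<and>
     (\<exists>C. \<forall>x. norm (F x) / (1 + norm x) powr a \<le> C))"

definition C1_0 :: "real \<Rightarrow> (real \<Rightarrow> real^'n) \<Rightarrow> bool" where
  "C1_0 T \<eta> \<longleftrightarrow> \<eta> 0 = 0 \<and>
     (\<exists>D. (\<forall>t\<in>{0..T}. (\<eta> has_vector_derivative D t) (at t within {0..T})) \<and> continuous_on {0..T} D)"

definition is_solution ::
  "(real^'d \<Rightarrow> real^'d) \<Rightarrow> (real^'n \<Rightarrow> real^'d) \<Rightarrow> (real^'d \<Rightarrow> real^'d) \<Rightarrow> real \<Rightarrow> real^'d
    \<Rightarrow> (real \<Rightarrow> real^'n) \<Rightarrow> (real \<Rightarrow> real^'d) \<Rightarrow> bool" where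
  "is_solution A B F T x \<eta> y \<longleftrightarrow> continuous_on {0..T} y \<and>
     (\<forall>t\<in>{0..T}. y t = x + integral {0..t} (\<lambda>s. A (y s) + F (y s)) + B (\<eta> t))"

end

theory Submission
  imports Defs
begin

lemma exp_has_integral:
  fixes c t :: real
  assumes "c > 0" "t \<ge> 0"
  shows "((\<lambda>s. exp (c* s)) has_integral ((exp (c*t) - 1)/c)) {0..t}"
proof -
  have "((\<lambda>s. exp (c* s)) has_integral ((\<lambda>s. exp (c* s)/c) t - (\<lambda>s. exp (c* s)/c) 0)) {0..t}"
  proof (rule fundamental_theorem_of_calculus[OF assms(2)])
    fix s assume "s \<in> {0..t}"
    have "((\<lambda>s. exp (c* s)/c) has_real_derivative (exp (c* s) * c)/c) (at s within {0..t})"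
      by (auto intro!: derivative_eq_intros)
    then show "((\<lambda>s. exp (c* s)/c) has_vector_derivative exp (c* s)) (at s within {0..t})"
      using assms by (simp add: has_real_derivative_iff_has_vector_derivative)
  qed
  then show ?thesis by (simp add: diff_divide_distrib)
qed

lemma gronwall:
  fixes u :: "real \<Rightarrow> real"
  assumes cont: "continuous_on {0..T} u" and L: "L > 0" and al: "\<alpha> \<ge> 0"
    and le: "\<And>t. t \<in> {0..T} \<Longrightarrow> u t \<le> \<alpha> + L * integral {0..t} u"
    and t: "t \<in> {0..T}"
  shows "u t \<le> \<alpha> * exp (2*L*T)"
proof -
  define v where "v s = u s * exp (-(2*L* s))" for s
  have cv: "continuous_on {0..T} v" unfolding v_def
    by (intro continuous_intros cont)
  obtain t1 where t1: "t1 \<in> {0..T}" and mx: "\<And>s. s \<in> {0..T} \<Longrightarrow> v s \<le> v t1"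
    using continuous_attains_sup[OF compact_Icc _ cv] t by fastforce
  define M where "M = v t1"
  have uM: "u s \<le> M * exp (2*L* s)" if "s \<in> {0..T}" for s
  proof -
    have "u s = v s * exp (2*L* s)" by (simp add: v_def mult.assoc flip: exp_add)
    also have "\<dots> \<le> M * exp (2*L* s)" using mx[OF that] by (simp add: M_def)
    finally show ?thesis .
  qed
  have key: "u s \<le> \<alpha> + M * (exp (2*L* s) - 1) / 2" if s: "s \<in> {0..T}" for s
  proof -
    have sub: "{0..s} \<subseteq> {0..T}" using s by auto
    have int1: "u integrable_on {0..s}"
      by (rule integrable_continuous_real) (rule continuous_on_subset[OF cont sub])
    have hi: "((\<lambda>r. M * exp (2*L*r)) has_integral M * ((exp (2*L* s) - 1)/(2*L))) {0..s}"
      using exp_has_integral[of "2*L" s] L s by (intro has_integral_mult_right) auto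
    have "integral {0..s} u \<le> integral {0..s} (\<lambda>r. M * exp (2*L*r))"
      by (rule integral_le[OF int1 has_integral_integrable[OF hi]]) (use uM sub in auto)
    also have "\<dots> = M * ((exp (2*L* s) - 1)/(2*L))" by (rule integral_unique[OF hi])
    finally have "integral {0..s} u \<le> M * ((exp (2*L* s) - 1)/(2*L))" .
    then have "L * integral {0..s} u \<le> L * (M * ((exp (2*L* s) - 1)/(2*L)))"
      using L by (intro mult_left_mono) auto
    also have "\<dots> = M * (exp (2*L* s) - 1) / 2" using L by (simp add: field_simps)
    finally show ?thesis using le[OF s] by linarith
  qed
  have Mle: "M \<le> \<alpha>"
  proof (rule ccontr)
    assume "\<not> M \<le> \<alpha>"
    then have M0: "M > \<alpha>" "M > 0" using al by auto
    define E where "E = exp (2*L*t1)"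
    have E1: "E \<ge> 1" using t1 L by (auto simp: E_def)
    have "u t1 = M * E" unfolding M_def v_def E_def by (simp add: mult.assoc flip: exp_add)
    with key[OF t1] have "M * E \<le> \<alpha> + M * (E - 1) / 2" by (simp add: E_def)
    then have "M * E + M \<le> 2 * \<alpha>" by (simp add: field_simps)
    moreover have "M * E \<ge> M" using E1 M0 by simp
    ultimately show False using M0 by linarith
  qed
  have e1: "exp (2*L*t) \<le> exp (2*L*T)" using t L by auto
  show ?thesis
  proof (cases "M \<ge> 0")
    case True
    have "u t \<le> M * exp (2*L*t)" by (rule uM[OF t])
    also have "\<dots> \<le> \<alpha> * exp (2*L*T)" using Mle True e1 by (intro mult_mono) auto
    finally show ?thesis .
  next
    case False
    have "u t \<le> M * exp (2*L*t)" by (rule uM[OF t])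
    also have "\<dots> \<le> 0" using False by (simp add: mult_nonpos_nonneg)
    also have "\<dots> \<le> \<alpha> * exp (2*L*T)" using al by simp
    finally show ?thesis .
  qed
qed

definition sol :: "('a::euclidean_space \<Rightarrow> 'a) \<Rightarrow> 'a \<Rightarrow> (real \<Rightarrow> 'a) \<Rightarrow> real \<Rightarrow> (real \<Rightarrow> 'a) \<Rightarrow> bool" where
  "sol G x h T y \<longleftrightarrow> continuous_on {0..T} y \<and>
     (\<forall>t\<in>{0..T}. y t = x + integral {0..t} (\<lambda>s. G (y s)) + h t)"

lemma lip_cont: "L-lipschitz_on UNIV G \<Longrightarrow> continuous_on S G"
  using lipschitz_on_continuous_on lipschitz_on_subset by blast

lemma comp_integrable:
  fixes G :: "'a::euclidean_space \<Rightarrow> 'b::euclidean_space"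
  assumes "continuous_on UNIV G" "continuous_on {0..T} y" "t \<in> {0..(T::real)}"
  shows "(\<lambda>s. G (y s)) integrable_on {0..t}"
proof -
  have "continuous_on {0..t} y" by (rule continuous_on_subset[OF assms(2)]) (use assms(3) in auto)
  then have "continuous_on {0..t} (\<lambda>s. G (y s))"
    using continuous_on_compose2[OF assms(1) _ subset_UNIV] by blast
  then show ?thesis by (rule integrable_continuous_real)
qed

lemma cont_integrable:
  fixes f :: "real \<Rightarrow> 'b::euclidean_space"
  assumes "continuous_on {0..T} f" "t \<in> {0..T}"
  shows "f integrable_on {0..t}"
  by (rule integrable_continuous_real, rule continuous_on_subset[OF assms(1)]) (use assms(2) in auto)

lemma norm_integral_le:
  fixes f :: "real \<Rightarrow> 'b::euclidean_space"
  assumes "continuous_on {0..T} f" "t \<in> {0..T}" "continuous_on {0..T} g"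
    "\<And>s. s \<in> {0..T} \<Longrightarrow> norm (f s) \<le> g s"
  shows "norm (integral {0..t} f) \<le> integral {0..t} g"
  by (rule integral_norm_bound_integral[OF cont_integrable[OF assms(1,2)] cont_integrable[OF assms(3,2)]])
     (use assms in auto)

lemma integral_nonneg0:
  fixes u :: "real \<Rightarrow> real"
  assumes "continuous_on {0..T} u" "t \<in> {0..T}" "\<And>s. s \<in> {0..T} \<Longrightarrow> 0 \<le> u s"
  shows "0 \<le> integral {0..t} u"
  by (rule integral_nonneg[OF cont_integrable[OF assms(1,2)]]) (use assms in auto)

lemma sol_diff_bound:
  fixes G :: "'a::euclidean_space \<Rightarrow> 'a"
  assumes G: "L-lipschitz_on UNIV G" and s1: "sol G x1 h1 T y1" and s2: "sol G x2 h2 T y2"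
    and K: "\<And>t. t \<in> {0..T} \<Longrightarrow> norm (x1 - x2 + (h1 t - h2 t)) \<le> K" and K0: "K \<ge> 0"
    and t: "t \<in> {0..T}"
  shows "norm (y1 t - y2 t) \<le> K * exp (2*(L+1)*T)"
proof -
  have L0: "L \<ge> 0" using lipschitz_on_nonneg[OF G] .
  have cG: "continuous_on UNIV G" using lip_cont[OF G] .
  have c1: "continuous_on {0..T} y1" and c2: "continuous_on {0..T} y2" using s1 s2 by (auto simp: sol_def)
  define u where "u s = norm (y1 s - y2 s)" for s
  have cu: "continuous_on {0..T} u" unfolding u_def by (intro continuous_intros c1 c2)
  have "u t \<le> K * exp (2*(L+1)*T)"
  proof (rule gronwall[of T u "L+1" K, OF cu _ K0 _ t])
    show "0 < L + 1" using L0 by simp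
    fix s assume s: "s \<in> {0..T}"
    have i1: "(\<lambda>r. G (y1 r)) integrable_on {0..s}" by (rule comp_integrable[OF cG c1 s])
    have i2: "(\<lambda>r. G (y2 r)) integrable_on {0..s}" by (rule comp_integrable[OF cG c2 s])
    have "y1 s - y2 s = (x1 - x2 + (h1 s - h2 s)) + (integral {0..s} (\<lambda>r. G (y1 r)) - integral {0..s} (\<lambda>r. G (y2 r)))"
      using s1 s2 s by (auto simp: sol_def algebra_simps)
    also have "integral {0..s} (\<lambda>r. G (y1 r)) - integral {0..s} (\<lambda>r. G (y2 r)) = integral {0..s} (\<lambda>r. G (y1 r) - G (y2 r))"
      by (rule integral_diff[OF i1 i2, symmetric])
    finally have eq: "y1 s - y2 s = (x1 - x2 + (h1 s - h2 s)) + integral {0..s} (\<lambda>r. G (y1 r) - G (y2 r))" .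
    have "norm (integral {0..s} (\<lambda>r. G (y1 r) - G (y2 r))) \<le> integral {0..s} (\<lambda>r. L * u r)"
    proof (rule norm_integral_le[OF _ s])
      show "continuous_on {0..T} (\<lambda>r. G (y1 r) - G (y2 r))"
        by (intro continuous_intros continuous_on_compose2[OF cG c1 subset_UNIV] continuous_on_compose2[OF cG c2 subset_UNIV])
      show "continuous_on {0..T} (\<lambda>r. L * u r)" by (intro continuous_intros cu)
      fix r assume "r \<in> {0..T}"
      show "norm (G (y1 r) - G (y2 r)) \<le> L * u r"
        using lipschitz_onD[OF G, of "y1 r" "y2 r"] by (simp add: u_def dist_norm)
    qed
    also have "\<dots> = L * integral {0..s} u" by simp
    also have "\<dots> \<le> (L+1) * integral {0..s} u"
      using integral_nonneg0[OF cu s] by (simp add: u_def distrib_right)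
    finally have "norm (integral {0..s} (\<lambda>r. G (y1 r) - G (y2 r))) \<le> (L+1) * integral {0..s} u" .
    then show "u s \<le> K + (L + 1) * integral {0..s} u"
      unfolding u_def eq using K[OF s] norm_triangle_ineq[of "x1 - x2 + (h1 s - h2 s)" "integral {0..s} (\<lambda>r. G (y1 r) - G (y2 r))"]
      by (simp add: u_def)
  qed
  then show ?thesis by (simp add: u_def)
qed

lemma sol_unique:
  fixes G :: "'a::euclidean_space \<Rightarrow> 'a"
  assumes G: "L-lipschitz_on UNIV G" and s1: "sol G x h T y1" and s2: "sol G x h T y2"
    and t: "t \<in> {0..T}"
  shows "y1 t = y2 t"
  using sol_diff_bound[OF G s1 s2, of 0 t] t by simp

lemma sol_norm_bound:
  fixes G :: "'a::euclidean_space \<Rightarrow> 'a"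
  assumes G: "L-lipschitz_on UNIV G" and sl: "sol G x h T y"
    and K: "\<And>t. t \<in> {0..T} \<Longrightarrow> norm x + norm (h t) + T * norm (G 0) \<le> K"
    and t: "t \<in> {0..T}"
  shows "norm (y t) \<le> K * exp (2*(L+1)*T)"
proof -
  have L0: "L \<ge> 0" using lipschitz_on_nonneg[OF G] .
  have T0: "T \<ge> 0" using t by auto
  have K0: "K \<ge> 0" using K[OF t] T0 by (smt (verit) norm_ge_zero mult_nonneg_nonneg)
  have cG: "continuous_on UNIV G" using lip_cont[OF G] .
  have c: "continuous_on {0..T} y" using sl by (auto simp: sol_def)
  define u where "u s = norm (y s)" for s
  have cu: "continuous_on {0..T} u" unfolding u_def by (intro continuous_intros c)
  have "u t \<le> K * exp (2*(L+1)*T)"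
  proof (rule gronwall[of T u "L+1" K, OF cu _ K0 _ t])
    show "0 < L + 1" using L0 by simp
    fix s assume s: "s \<in> {0..T}"
    have "norm (integral {0..s} (\<lambda>r. G (y r))) \<le> integral {0..s} (\<lambda>r. norm (G 0) + L * u r)"
    proof (rule norm_integral_le[OF _ s])
      show "continuous_on {0..T} (\<lambda>r. G (y r))"
        by (rule continuous_on_compose2[OF cG c subset_UNIV])
      show "continuous_on {0..T} (\<lambda>r. norm (G 0) + L * u r)" by (intro continuous_intros cu)
      fix r assume "r \<in> {0..T}"
      show "norm (G (y r)) \<le> norm (G 0) + L * u r"
        using lipschitz_onD[OF G, of "y r" 0] norm_triangle_ineq2[of "G (y r)" "G 0"]
        by (simp add: u_def dist_norm)
    qed
    also have "\<dots> = s * norm (G 0) + L * integral {0..s} u"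
      using integral_add[OF cont_integrable[OF continuous_on_const s] cont_integrable[OF continuous_on_mult_left[OF cu] s]] s
      by simp
    also have "\<dots> \<le> T * norm (G 0) + (L+1) * integral {0..s} u"
      using integral_nonneg0[OF cu s] s by (intro add_mono mult_right_mono) (auto simp: u_def)
    finally have *: "norm (integral {0..s} (\<lambda>r. G (y r))) \<le> T * norm (G 0) + (L+1) * integral {0..s} u" .
    have ys: "y s = x + integral {0..s} (\<lambda>r. G (y r)) + h s" using sl s by (simp add: sol_def)
    have "norm (y s) \<le> norm x + norm (integral {0..s} (\<lambda>r. G (y r))) + norm (h s)"
      unfolding ys using norm_triangle_ineq[of "x + integral {0..s} (\<lambda>r. G (y r))" "h s"]
        norm_triangle_ineq[of x "integral {0..s} (\<lambda>r. G (y r))"] by linarith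
    then show "u s \<le> K + (L + 1) * integral {0..s} u"
      using * K[OF s] unfolding u_def by linarith
  qed
  then show ?thesis by (simp add: u_def)
qed

lemma clamp_real_in: "(T::real) \<ge> 0 \<Longrightarrow> clamp 0 T t \<in> {0..T}"
  using clamp_in_interval[of 0 T t] by auto

lemma clamp_real_id: "(t::real) \<in> {0..T} \<Longrightarrow> clamp 0 T t = t"
  using clamp_cancel_cbox[of t 0 T] by auto

lemma sol_exists:
  fixes G :: "'a::euclidean_space \<Rightarrow> 'a"
  assumes G: "L-lipschitz_on UNIV G" and h: "continuous_on {0..T} h" and T: "T \<ge> 0"
  shows "\<exists>y. sol G x h T y"
proof -
  have L0: "L \<ge> 0" using lipschitz_on_nonneg[OF G] .
  have cG: "continuous_on UNIV G" using lip_cont[OF G] .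
  define c where "c = 2*(L+1)"
  have c0: "c > 0" using L0 by (simp add: c_def)
  define f where "f v t = exp (-(c*t)) *\<^sub>R (x + integral {0..t} (\<lambda>s. G (exp (c * s) *\<^sub>R apply_bcontfun v s)) + h t)"
    for v :: "real \<Rightarrow>\<^sub>C 'a" and t
  have cgv: "continuous_on UNIV (\<lambda>s. G (exp (c * s) *\<^sub>R apply_bcontfun v s))" for v :: "real \<Rightarrow>\<^sub>C 'a"
    by (rule continuous_on_compose2[OF cG _ subset_UNIV]) (intro continuous_intros continuous_on_apply_bcontfun)
  have cf: "continuous_on {0..T} (f v)" for v
  proof -
    have "continuous_on {0..T} (\<lambda>t. integral {0..t} (\<lambda>s. G (exp (c * s) *\<^sub>R apply_bcontfun v s)))"
      by (rule indefinite_integral_continuous_1, rule integrable_continuous_real, rule continuous_on_subset[OF cgv]) auto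
    then show ?thesis unfolding f_def by (intro continuous_intros h)
  qed
  have ex: "\<exists>g::real \<Rightarrow>\<^sub>C 'a. \<forall>t. apply_bcontfun g t = f v (clamp 0 T t)" for v
  proof -
    have "continuous_on (cbox 0 T) (f v)" using cf by simp
    from continuous_on_cbox_bcontfunE[OF this] obtain g :: "real \<Rightarrow>\<^sub>C 'a" where
      "\<And>t. apply_bcontfun g t = f v (clamp 0 T t)" by metis
    then show ?thesis by blast
  qed
  define \<Psi> where "\<Psi> v = (SOME g::real \<Rightarrow>\<^sub>C 'a. \<forall>t. apply_bcontfun g t = f v (clamp 0 T t))" for v
  have \<Psi>: "apply_bcontfun (\<Psi> v) t = f v (clamp 0 T t)" for v t
    unfolding \<Psi>_def using someI_ex[OF ex[of v]] by blast
  have contr: "dist (\<Psi> v) (\<Psi> w) \<le> 1/2 * dist v w" for v w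
  proof (rule dist_bound)
    fix t
    define s where "s = clamp 0 T t"
    have s: "s \<in> {0..T}" unfolding s_def by (rule clamp_real_in[OF T])
    define D where "D = dist v w"
    have i1: "(\<lambda>r. G (exp (c * r) *\<^sub>R apply_bcontfun v r)) integrable_on {0..s}"
      by (rule integrable_continuous_real, rule continuous_on_subset[OF cgv]) auto
    have i2: "(\<lambda>r. G (exp (c * r) *\<^sub>R apply_bcontfun w r)) integrable_on {0..s}"
      by (rule integrable_continuous_real, rule continuous_on_subset[OF cgv]) auto
    have hi: "((\<lambda>r. L * D * exp (c * r)) has_integral L * D * ((exp (c * s) - 1)/c)) {0..s}"
      using exp_has_integral[OF c0, of s] s by (intro has_integral_mult_right) auto
    have "norm (integral {0..s} (\<lambda>r. G (exp (c * r) *\<^sub>R apply_bcontfun v r) - G (exp (c * r) *\<^sub>R apply_bcontfun w r)))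
        \<le> integral {0..s} (\<lambda>r. L * D * exp (c * r))"
    proof (rule integral_norm_bound_integral[OF integrable_diff[OF i1 i2] has_integral_integrable[OF hi]])
      fix r assume r: "r \<in> {0..s}"
      have "norm (G (exp (c * r) *\<^sub>R apply_bcontfun v r) - G (exp (c * r) *\<^sub>R apply_bcontfun w r))
          \<le> L * norm (exp (c * r) *\<^sub>R apply_bcontfun v r - exp (c * r) *\<^sub>R apply_bcontfun w r)"
        using lipschitz_onD[OF G, of "exp (c * r) *\<^sub>R apply_bcontfun v r" "exp (c * r) *\<^sub>R apply_bcontfun w r"]
        by (simp add: dist_norm)
      also have "\<dots> = L * (exp (c * r) * dist (apply_bcontfun v r) (apply_bcontfun w r))"
        by (simp add: dist_norm flip: scaleR_diff_right)
      also have "\<dots> \<le> L * (exp (c * r) * D)"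
        unfolding D_def using L0 by (intro mult_left_mono dist_bounded) auto
      finally show "norm (G (exp (c * r) *\<^sub>R apply_bcontfun v r) - G (exp (c * r) *\<^sub>R apply_bcontfun w r))
          \<le> L * D * exp (c * r)" by (simp add: mult_ac)
    qed
    also have "\<dots> = L * D * ((exp (c * s) - 1)/c)" by (rule integral_unique[OF hi])
    finally have nI: "norm (integral {0..s} (\<lambda>r. G (exp (c * r) *\<^sub>R apply_bcontfun v r)) - integral {0..s} (\<lambda>r. G (exp (c * r) *\<^sub>R apply_bcontfun w r)))
        \<le> L * D * ((exp (c * s) - 1)/c)" using integral_diff[OF i1 i2] by simp
    have "dist (\<Psi> v t) (\<Psi> w t) = norm (f v s - f w s)" by (simp add: \<Psi> s_def dist_norm)
    also have "f v s - f w s = exp (-(c * s)) *\<^sub>R (integral {0..s} (\<lambda>r. G (exp (c * r) *\<^sub>R apply_bcontfun v r)) - integral {0..s} (\<lambda>r. G (exp (c * r) *\<^sub>R apply_bcontfun w r)))"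
      unfolding f_def by (simp add: algebra_simps)
    also have "norm \<dots> = exp (-(c * s)) * norm (integral {0..s} (\<lambda>r. G (exp (c * r) *\<^sub>R apply_bcontfun v r)) - integral {0..s} (\<lambda>r. G (exp (c * r) *\<^sub>R apply_bcontfun w r)))"
      by simp
    also have "\<dots> \<le> exp (-(c * s)) * (L * D * ((exp (c * s) - 1)/c))"
      using nI by (intro mult_left_mono) auto
    also have "\<dots> = L * D * ((1 - exp (-(c * s)))/c)"
      by (simp add: field_simps exp_minus)
    also have "\<dots> \<le> L * D * (1/c)"
      using L0 c0 by (intro mult_left_mono divide_right_mono) (auto simp: D_def)
    also have "\<dots> \<le> 1/2 * D"
      using L0 c0 by (simp add: c_def field_simps D_def)
    finally show "dist (\<Psi> v t) (\<Psi> w t) \<le> 1/2 * dist v w" by (simp add: D_def)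
  qed
  obtain v where v: "\<Psi> v = v"
    using banach_fix_type[of "1/2" \<Psi>] contr by auto
  define y where "y t = exp (c * t) *\<^sub>R apply_bcontfun v t" for t
  have "sol G x h T y"
    unfolding sol_def
  proof (intro conjI ballI)
    show "continuous_on {0..T} y" unfolding y_def by (intro continuous_intros continuous_on_apply_bcontfun)
    fix t assume t: "t \<in> {0..T}"
    have "apply_bcontfun v t = f v t" using \<Psi>[of v t] v clamp_real_id[OF t] by simp
    then have "y t = exp (c * t) *\<^sub>R f v t" by (simp add: y_def)
    also have "\<dots> = x + integral {0..t} (\<lambda>s. G (exp (c * s) *\<^sub>R apply_bcontfun v s)) + h t"
      by (simp add: f_def flip: exp_add)
    finally show "y t = x + integral {0..t} (\<lambda>s. G (y s)) + h t" by (simp add: y_def)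
  qed
  then show ?thesis by blast
qed

definition ctrl :: "(real \<Rightarrow> 'b::euclidean_space) \<Rightarrow> bool" where
  "ctrl \<eta> \<longleftrightarrow> (\<exists>D. (\<forall>s. (\<eta> has_vector_derivative D s) (at s)) \<and> continuous_on UNIV D) \<and> (\<forall>s\<le>0. \<eta> s = 0)"

lemma ctrl_cont: "ctrl \<eta> \<Longrightarrow> continuous_on S \<eta>"
  unfolding ctrl_def
  by (metis continuous_at_imp_continuous_on has_vector_derivative_continuous)

lemma lin_vderiv:
  assumes "bounded_linear B" "(f has_vector_derivative D) F"
  shows "((\<lambda>s. B (f s)) has_vector_derivative B D) F"
proof -
  have "((\<lambda>s. B (f s)) has_derivative (\<lambda>x. B (x *\<^sub>R D))) F"
    using bounded_linear.has_derivative[OF assms(1)] assms(2) unfolding has_vector_derivative_def by blast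
  then show ?thesis unfolding has_vector_derivative_def
    by (simp add: linear_scale[OF bounded_linear.linear[OF assms(1)]])
qed

lemma ctrl_add: assumes "ctrl f" "ctrl g" shows "ctrl (\<lambda>s. f s + g s)"
proof -
  obtain D1 where D1: "\<And>s. (f has_vector_derivative D1 s) (at s)" "continuous_on UNIV D1"
    and z1: "\<And>s. s \<le> 0 \<Longrightarrow> f s = 0" using assms(1) unfolding ctrl_def by blast
  obtain D2 where D2: "\<And>s. (g has_vector_derivative D2 s) (at s)" "continuous_on UNIV D2"
    and z2: "\<And>s. s \<le> 0 \<Longrightarrow> g s = 0" using assms(2) unfolding ctrl_def by blast
  show ?thesis unfolding ctrl_def
    by (intro conjI exI[of _ "\<lambda>s. D1 s + D2 s"] allI impI has_vector_derivative_add D1 D2 continuous_on_add)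
       (simp add: z1 z2)
qed

lemma ctrl_scale: assumes "ctrl f" shows "ctrl (\<lambda>s. c *\<^sub>R f s)"
proof -
  obtain D1 where D1: "\<And>s. (f has_vector_derivative D1 s) (at s)" "continuous_on UNIV D1"
    and z1: "\<And>s. s \<le> 0 \<Longrightarrow> f s = 0" using assms(1) unfolding ctrl_def by blast
  show ?thesis unfolding ctrl_def
    by (intro conjI exI[of _ "\<lambda>s. c *\<^sub>R D1 s"] allI impI has_vector_derivative_scaleR[OF DERIV_const D1(1), simplified] continuous_intros D1)
       (simp add: z1)
qed

lemma ctrl_shift:
  assumes "ctrl \<eta>" "h \<ge> 0"
  shows "ctrl (\<lambda>s. \<eta> (s - h))"
proof -
  obtain D where D: "\<And>s. (\<eta> has_vector_derivative D s) (at s)" "continuous_on UNIV D"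
    and z: "\<And>s. s \<le> 0 \<Longrightarrow> \<eta> s = 0" using assms(1) unfolding ctrl_def by blast
  have "((\<lambda>s. \<eta> (s - h)) has_vector_derivative D (s - h)) (at s)" for s
  proof -
    have 1: "((\<lambda>s. s - h) has_vector_derivative 1) (at s)" by (auto intro!: derivative_eq_intros)
    have 2: "(\<eta> has_vector_derivative D (s - h)) (at (s - h) within range (\<lambda>s. s - h))"
      using D(1) by (rule has_vector_derivative_at_within)
    show ?thesis using vector_diff_chain_within[OF 1 2] by (simp add: o_def)
  qed
  moreover have "continuous_on UNIV (\<lambda>s. D (s - h))"
    by (rule continuous_on_compose2[OF D(2)]) (auto intro!: continuous_intros)
  ultimately show ?thesis unfolding ctrl_def using z assms(2)
    by (intro conjI exI[of _ "\<lambda>s. D (s - h)"]) auto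
qed

lemma lin_lip:
  fixes A :: "'a::euclidean_space \<Rightarrow> 'b::euclidean_space"
  assumes "linear A"
  obtains K where "K > 0" "K-lipschitz_on UNIV A" "\<And>x. norm (A x) \<le> K * norm x"
proof -
  have bl: "bounded_linear A" using assms by (simp add: linear_conv_bounded_linear)
  obtain K where K: "K > 0" "\<And>x. norm (A x) \<le> norm x * K" using bounded_linear.pos_bounded[OF bl] by blast
  have "K-lipschitz_on UNIV A"
    by (rule lipschitz_onI) (use K in \<open>auto simp: dist_norm mult.commute linear_diff[OF assms, symmetric]\<close>)
  then show ?thesis using that K by (auto simp: mult.commute)
qed

definition rq :: "real \<Rightarrow> real" where "rq s = (if s \<le> 0 then 0 else s^2/2)"

lemma rq_deriv: "(rq has_real_derivative max s 0) (at s)"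
proof -
  consider "s < 0" | "s > 0" | "s = 0" by linarith
  then show ?thesis
  proof cases
    case 1
    have ev: "\<forall>\<^sub>F x in nhds s. (\<lambda>_. 0) x = rq x"
      using eventually_nhds_in_open[of "{..<0}" s] 1 by (auto elim!: eventually_mono simp: rq_def)
    have "((\<lambda>_. 0::real) has_real_derivative 0) (at s)" by simp
    then show ?thesis using DERIV_cong_ev[OF refl ev, of 0 0] 1 by simp
  next
    case 2
    have ev: "\<forall>\<^sub>F x in nhds s. (\<lambda>x. x^2/2) x = rq x"
      using eventually_nhds_in_open[of "{0<..}" s] 2 by (auto elim!: eventually_mono simp: rq_def)
    have "((\<lambda>x. x^2/2) has_real_derivative s) (at s)" by (auto intro!: derivative_eq_intros)
    then show ?thesis using DERIV_cong_ev[OF refl ev, of s s] 2 by simp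
  next
    case 3
    have ev: "\<forall>\<^sub>F h in at 0. max h 0 / 2 = (rq (0 + h) - rq 0) / h"
      unfolding eventually_at_filter by (auto simp: rq_def power2_eq_square max_def)
    have "((\<lambda>h. max h 0 / 2) \<longlongrightarrow> max 0 0 / 2) (at (0::real))"
      by (intro tendsto_intros) simp
    then have "((\<lambda>h. (rq (0 + h) - rq 0) / h) \<longlongrightarrow> 0) (at (0::real))"
      using tendsto_cong[OF ev] by simp
    then show ?thesis using 3 by (simp add: DERIV_def)
  qed
qed

lemma ctrl_rq: "ctrl (\<lambda>s. rq s *\<^sub>R w)"
proof -
  have "((\<lambda>s. rq s *\<^sub>R w) has_vector_derivative max s 0 *\<^sub>R w) (at s)" for s
    using has_vector_derivative_scaleR[OF rq_deriv[of s] has_vector_derivative_const[of w]] by simp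
  moreover have "continuous_on UNIV (\<lambda>s. max s 0 *\<^sub>R w)" by (intro continuous_intros)
  ultimately show ?thesis unfolding ctrl_def
    by (intro conjI exI[of _ "\<lambda>s. max s 0 *\<^sub>R w"]) (auto simp: rq_def)
qed

lemma sol_at0:
  assumes "sol G x h T z" "T \<ge> 0"
  shows "z 0 = x + h 0"
  using assms unfolding sol_def by auto

lemma lincomp:
  fixes A :: "'a::euclidean_space \<Rightarrow> 'b::euclidean_space" and z :: "real \<Rightarrow> 'a"
  assumes "linear A" "continuous_on S z"
  shows "continuous_on S (\<lambda>s. A (z s))"
  using linear_continuous_on_compose[OF assms(2) assms(1)] .

lemma linear_funpow:
  fixes A :: "'a::real_vector \<Rightarrow> 'a"
  shows "linear A \<Longrightarrow> linear (A ^^ j)"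
proof (induction j)
  case 0
  have "linear (\<lambda>x::'a. x)" by (rule linearI) auto
  moreover have "A ^^ 0 = (\<lambda>x. x)" by (simp add: fun_eq_iff)
  ultimately show ?case by simp
next
  case (Suc j)
  then show ?case using linear_compose[of "A ^^ j" A] by (simp add: comp_def)
qed

lemma bl_funpow:
  fixes A :: "'a::euclidean_space \<Rightarrow> 'a"
  shows "linear A \<Longrightarrow> bounded_linear (\<lambda>v. p \<bullet> (A ^^ j) v)"
  using linear_funpow[of A j]
  by (intro bounded_linear_compose[OF bounded_linear_inner_right]) (simp add: linear_conv_bounded_linear)

lemma lin_sol_deriv:
  fixes A :: "'a::euclidean_space \<Rightarrow> 'a" and B :: "'b::euclidean_space \<Rightarrow> 'a"
  assumes A: "linear A" and B: "linear B" and s: "sol A 0 (\<lambda>t. B (\<eta> t)) T z"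
    and D: "(\<eta> has_vector_derivative D) (at t)" and t: "t \<in> {0..T}"
  shows "(z has_vector_derivative (A (z t) + B D)) (at t within {0..T})"
proof -
  have cz: "continuous_on {0..T} z" using s by (simp add: sol_def)
  have cA: "continuous_on {0..T} (\<lambda>s. A (z s))"
    by (rule lincomp[OF A cz])
  have d1: "((\<lambda>u. integral {0..u} (\<lambda>s. A (z s))) has_vector_derivative A (z t)) (at t within {0..T})"
    by (rule integral_has_vector_derivative[OF cA t])
  have d2: "((\<lambda>s. B (\<eta> s)) has_vector_derivative B D) (at t within {0..T})"
    by (rule lin_vderiv) (use B D in \<open>auto simp: linear_conv_bounded_linear intro: has_vector_derivative_at_within\<close>)
  have "((\<lambda>u. 0 + integral {0..u} (\<lambda>s. A (z s)) + B (\<eta> u)) has_vector_derivative (A (z t) + B D)) (at t within {0..T})"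
    using has_vector_derivative_add[OF d1 d2] by simp
  then show ?thesis
    by (rule has_vector_derivative_transform[OF t, rotated]) (use s in \<open>auto simp: sol_def\<close>)
qed

lemma zero_deriv:
  fixes \<phi> :: "real \<Rightarrow> 'a::real_normed_vector"
  assumes T: "T > 0" and t: "t \<in> {0..T}" and d: "(\<phi> has_vector_derivative D) (at t within {0..T})"
    and z: "\<And>s. s \<in> {0..T} \<Longrightarrow> \<phi> s = 0"
  shows "D = 0"
proof -
  have d00: "((\<lambda>_. 0::'a) has_vector_derivative 0) (at t within {0..T})" by simp
  have d0: "(\<phi> has_vector_derivative 0) (at t within {0..T})"
    by (rule has_vector_derivative_transform[OF t _ d00]) (use z in auto)
  show ?thesis
    using vector_derivative_unique_within_closed_interval[of 0 T t \<phi> D 0] T t d d0 by simp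
qed

definition VT :: "('a::euclidean_space \<Rightarrow> 'a) \<Rightarrow> ('b::euclidean_space \<Rightarrow> 'a) \<Rightarrow> real \<Rightarrow> 'a set" where
  "VT A B T = {z T | \<eta> z. ctrl \<eta> \<and> sol A 0 (\<lambda>t. B (\<eta> t)) T z}"

lemma lin_sol_shift:
  fixes A :: "'a::euclidean_space \<Rightarrow> 'a" and B :: "'b::euclidean_space \<Rightarrow> 'a"
  assumes A: "linear A" and B: "linear B" and c: "ctrl \<eta>" and s: "sol A 0 (\<lambda>t. B (\<eta> t)) T z"
    and t0: "t0 \<in> {0..T}"
  shows "sol A 0 (\<lambda>s. B (\<eta> (s - (T - t0)))) T (\<lambda>s. z (max 0 (s - (T - t0))))"
proof -
  define h where "h = T - t0"
  have h: "0 \<le> h" "h \<le> T" using t0 by (auto simp: h_def)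
  have T0: "T \<ge> 0" using t0 by auto
  have cz: "continuous_on {0..T} z" using s by (simp add: sol_def)
  have \<eta>0: "\<And>s. s \<le> 0 \<Longrightarrow> \<eta> s = 0" using c by (simp add: ctrl_def)
  have z0: "z 0 = 0" using sol_at0[OF s T0] \<eta>0[of 0] linear_0[OF B] by simp
  have A0: "A 0 = 0" using linear_0[OF A] .
  have cA: "continuous_on {0..T} (\<lambda>s. A (z s))"
    by (rule lincomp[OF A cz])
  define z' where "z' s = z (max 0 (s - h))" for s
  have cz': "continuous_on {0..T} z'" unfolding z'_def
    by (rule continuous_on_compose2[OF cz]) (use h in \<open>auto intro!: continuous_intros\<close>)
  have cA': "continuous_on {0..T} (\<lambda>s. A (z' s))"
    by (rule lincomp[OF A cz'])
  have "z' s = 0 + integral {0..s} (\<lambda>r. A (z' r)) + B (\<eta> (s - h))" if sT: "s \<in> {0..T}" for s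
  proof (cases "s \<le> h")
    case True
    have "integral {0..s} (\<lambda>r. A (z' r)) = integral {0..s} (\<lambda>r. 0)"
      by (rule integral_cong) (use True in \<open>auto simp: z'_def z0 A0\<close>)
    then show ?thesis using True \<eta>0[of "s - h"] linear_0[OF B] by (simp add: z'_def z0)
  next
    case False
    have sh: "s - h \<in> {0..T}" using False sT h by auto
    have "integral {0..s} (\<lambda>r. A (z' r)) = integral {0..h} (\<lambda>r. A (z' r)) + integral {h..s} (\<lambda>r. A (z' r))"
      using Henstock_Kurzweil_Integration.integral_combine[where a=0 and c=h and b=s and f="\<lambda>r. A (z' r)", OF _ _ cont_integrable[OF cA' sT]] False h by simp
    also have "integral {0..h} (\<lambda>r. A (z' r)) = integral {0..h} (\<lambda>r. 0)"
      by (rule integral_cong) (auto simp: z'_def z0 A0)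
    also have "integral {h..s} (\<lambda>r. A (z' r)) = integral {0..s-h} ((\<lambda>r. A (z' r)) \<circ> (+) h)"
      using integral_shift_Icc_real[of 0 "s-h" "\<lambda>r. A (z' r)" h] by simp
    also have "\<dots> = integral {0..s-h} (\<lambda>r. A (z r))"
      by (rule integral_cong) (auto simp: z'_def)
    finally have "integral {0..s} (\<lambda>r. A (z' r)) = integral {0..s-h} (\<lambda>r. A (z r))" by simp
    moreover have "z' s = z (s - h)" using False by (simp add: z'_def)
    moreover have "z (s - h) = 0 + integral {0..s-h} (\<lambda>r. A (z r)) + B (\<eta> (s - h))"
      using s sh unfolding sol_def by blast
    ultimately show ?thesis by simp
  qed
  then show ?thesis using cz' unfolding sol_def z'_def h_def by auto
qed

lemma VT_subspace:
  fixes A :: "'a::euclidean_space \<Rightarrow> 'a" and B :: "'b::euclidean_space \<Rightarrow> 'a"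
  assumes A: "linear A" and B: "linear B"
  shows "subspace (VT A B T)"
  unfolding subspace_def
proof (intro conjI ballI allI)
  have "ctrl (\<lambda>s. 0 :: 'b)" unfolding ctrl_def
    by (intro conjI exI[of _ "\<lambda>s. 0"]) auto
  moreover have "sol A 0 (\<lambda>t. B ((\<lambda>s. 0) t)) T (\<lambda>s. 0)"
    unfolding sol_def by (simp add: linear_0[OF A] linear_0[OF B])
  ultimately show "0 \<in> VT A B T" unfolding VT_def by force
next
  fix u v assume "u \<in> VT A B T" "v \<in> VT A B T"
  then obtain \<eta>1 z1 \<eta>2 z2 where 1: "ctrl \<eta>1" "sol A 0 (\<lambda>t. B (\<eta>1 t)) T z1" "u = z1 T"
    and 2: "ctrl \<eta>2" "sol A 0 (\<lambda>t. B (\<eta>2 t)) T z2" "v = z2 T" unfolding VT_def by blast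
  have cA1: "continuous_on {0..T} (\<lambda>s. A (z1 s))"
    by (rule lincomp[OF A]) (use 1(2) in \<open>simp add: sol_def\<close>)
  have cA2: "continuous_on {0..T} (\<lambda>s. A (z2 s))"
    by (rule lincomp[OF A]) (use 2(2) in \<open>simp add: sol_def\<close>)
  have "sol A 0 (\<lambda>t. B (\<eta>1 t + \<eta>2 t)) T (\<lambda>s. z1 s + z2 s)"
    unfolding sol_def
  proof (intro conjI ballI)
    show "continuous_on {0..T} (\<lambda>s. z1 s + z2 s)" using 1(2) 2(2) by (auto simp: sol_def intro!: continuous_intros)
    fix t assume t: "t \<in> {0..T}"
    have "integral {0..t} (\<lambda>s. A (z1 s + z2 s)) = integral {0..t} (\<lambda>s. A (z1 s)) + integral {0..t} (\<lambda>s. A (z2 s))"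
      using integral_add[OF cont_integrable[OF cA1 t] cont_integrable[OF cA2 t]] by (simp add: linear_add[OF A])
    then show "z1 t + z2 t = 0 + integral {0..t} (\<lambda>s. A (z1 s + z2 s)) + B (\<eta>1 t + \<eta>2 t)"
      using 1(2) 2(2) t by (simp add: sol_def linear_add[OF B])
  qed
  then show "u + v \<in> VT A B T" unfolding VT_def using 1 2 ctrl_add[OF 1(1) 2(1)] by force
next
  fix c :: real and u assume "u \<in> VT A B T"
  then obtain \<eta>1 z1 where 1: "ctrl \<eta>1" "sol A 0 (\<lambda>t. B (\<eta>1 t)) T z1" "u = z1 T"
    unfolding VT_def by blast
  have cA1: "continuous_on {0..T} (\<lambda>s. A (z1 s))"
    by (rule lincomp[OF A]) (use 1(2) in \<open>simp add: sol_def\<close>)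
  have "sol A 0 (\<lambda>t. B (c *\<^sub>R \<eta>1 t)) T (\<lambda>s. c *\<^sub>R z1 s)"
    unfolding sol_def
  proof (intro conjI ballI)
    show "continuous_on {0..T} (\<lambda>s. c *\<^sub>R z1 s)" using 1(2) by (auto simp: sol_def intro!: continuous_intros)
    fix t assume t: "t \<in> {0..T}"
    have "integral {0..t} (\<lambda>s. A (c *\<^sub>R z1 s)) = c *\<^sub>R integral {0..t} (\<lambda>s. A (z1 s))"
      by (simp add: linear_scale[OF A])
    then show "c *\<^sub>R z1 t = 0 + integral {0..t} (\<lambda>s. A (c *\<^sub>R z1 s)) + B (c *\<^sub>R \<eta>1 t)"
      using 1(2) t by (simp add: sol_def linear_scale[OF B] scaleR_add_right)
  qed
  then show "c *\<^sub>R u \<in> VT A B T" unfolding VT_def using 1 ctrl_scale[OF 1(1)] by force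
qed

lemma VT_I: "ctrl \<eta> \<Longrightarrow> sol A 0 (\<lambda>t. B (\<eta> t)) T z \<Longrightarrow> z T \<in> VT A B T"
  unfolding VT_def by blast

lemma VT_full:
  fixes A :: "'a::euclidean_space \<Rightarrow> 'a" and B :: "'b::euclidean_space \<Rightarrow> 'a"
  assumes A: "linear A" and B: "linear B" and T: "T > 0"
    and K: "\<And>p. (\<forall>j w. p \<bullet> (A ^^ j) (B w) = 0) \<Longrightarrow> p = 0"
  shows "v \<in> VT A B T"
proof (rule ccontr)
  assume nv: "v \<notin> VT A B T"
  have sub: "subspace (VT A B T)" by (rule VT_subspace[OF A B])
  have sp: "span (VT A B T) = VT A B T" using sub by (simp add: span_eq_iff)
  have "span (VT A B T) \<noteq> UNIV" by (metis sp nv UNIV_I)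
  then obtain p :: 'a where p0: "p \<noteq> 0" and po: "span (VT A B T) \<subseteq> {x. p \<bullet> x = 0}"
    using span_not_univ_subset_hyperplane by blast
  have pV: "p \<bullet> u = 0" if "u \<in> VT A B T" for u using po that sp by auto
  have T0: "T \<ge> 0" using T by simp
  obtain KA where KA: "KA-lipschitz_on UNIV A" using lin_lip[OF A] by blast
  have blA: "bounded_linear A" and blB: "bounded_linear B" using A B by (auto simp: linear_conv_bounded_linear)
  define M where "M j v = p \<bullet> (A ^^ j) v" for j v
  have bM: "bounded_linear (M j)" for j unfolding M_def by (rule bl_funpow[OF A])
  define P where "P j \<longleftrightarrow> (\<forall>\<eta> z t. ctrl \<eta> \<longrightarrow> sol A 0 (\<lambda>t. B (\<eta> t)) T z \<longrightarrow> t \<in> {0..T} \<longrightarrow> M j (z t) = 0)" for j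
  have P0: "P 0"
    unfolding P_def
  proof (intro allI impI)
    fix \<eta> z t assume c: "ctrl \<eta>" and s: "sol A 0 (\<lambda>t. B (\<eta> t)) T z" and t: "t \<in> {0..T}"
    have "sol A 0 (\<lambda>s. B (\<eta> (s - (T - t)))) T (\<lambda>s. z (max 0 (s - (T - t))))" by (rule lin_sol_shift[OF A B c s t])
    moreover have "ctrl (\<lambda>s. \<eta> (s - (T - t)))" using ctrl_shift[OF c] t by auto
    ultimately have "(\<lambda>s. z (max 0 (s - (T - t)))) T \<in> VT A B T" by (rule VT_I[rotated])
    then show "M 0 (z t) = 0" using pV t by (simp add: M_def)
  qed
  have PQ: "M j (B w) = 0" if Pj: "P j" for j w
  proof -
    define \<eta> where "\<eta> s = rq s *\<^sub>R w" for s
    have c\<eta>: "ctrl \<eta>" using ctrl_rq[of w] by (simp add: \<eta>_def[abs_def])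
    have hc: "continuous_on {0..T} (\<lambda>t. B (\<eta> t))"
      by (rule lincomp[OF B ctrl_cont[OF c\<eta>]])
    obtain z where s: "sol A 0 (\<lambda>t. B (\<eta> t)) T z" using sol_exists[OF KA hc T0] by auto
    have bMA: "bounded_linear (\<lambda>v. M j (A v))" by (rule bounded_linear_compose[OF bM blA])
    have d\<eta>: "(\<eta> has_vector_derivative max t 0 *\<^sub>R w) (at t)" for t
      unfolding \<eta>_def using has_vector_derivative_scaleR[OF rq_deriv[of t] has_vector_derivative_const[of w]] by simp
    have zd: "(z has_vector_derivative (A (z t) + B (max t 0 *\<^sub>R w))) (at t within {0..T})" if "t \<in> {0..T}" for t
      by (rule lin_sol_deriv[OF A B s d\<eta> that])
    have z0: "z 0 = 0" using sol_at0[OF s T0] linear_0[OF B] by (simp add: \<eta>_def rq_def)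
    have e1: "M j (A (z t)) + t * M j (B w) = 0" if t: "t \<in> {0..T}" for t
    proof -
      have "((\<lambda>s. M j (z s)) has_vector_derivative M j (A (z t) + B (max t 0 *\<^sub>R w))) (at t within {0..T})"
        by (rule lin_vderiv[OF bM zd[OF t]])
      then have "M j (A (z t) + B (max t 0 *\<^sub>R w)) = 0"
        by (rule zero_deriv[OF T t]) (use Pj c\<eta> s in \<open>auto simp: P_def\<close>)
      then show ?thesis using t
        by (simp add: linear_add[OF bounded_linear.linear[OF bM]] linear_scale[OF bounded_linear.linear[OF bM]] linear_scale[OF B])
    qed
    have d1: "((\<lambda>t. M j (A (z t))) has_vector_derivative M j (A (A (z 0) + B (max 0 0 *\<^sub>R w)))) (at 0 within {0..T})"
      by (rule lin_vderiv[OF bMA zd]) (use T in auto)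
    have d2: "((\<lambda>t. t * M j (B w)) has_vector_derivative M j (B w)) (at 0 within {0..T})"
      unfolding has_real_derivative_iff_has_vector_derivative[symmetric]
      by (auto intro!: derivative_eq_intros)
    have dd: "((\<lambda>t. M j (A (z t)) + t * M j (B w)) has_vector_derivative (M j (A (A (z 0) + B (max 0 0 *\<^sub>R w))) + M j (B w))) (at 0 within {0..T})"
      by (rule has_vector_derivative_add[OF d1 d2])
    have "M j (A (A (z 0) + B (max 0 0 *\<^sub>R w))) + M j (B w) = 0"
      by (rule zero_deriv[OF T _ dd e1]) (use T in auto)
    then show ?thesis using z0 by (simp add: linear_0[OF A] linear_0[OF B] linear_0[OF bounded_linear.linear[OF bM]])
  qed
  have PS: "P (Suc j)" if Pj: "P j" for j
    unfolding P_def
  proof (intro allI impI)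
    fix \<eta> z t assume c: "ctrl \<eta>" and s: "sol A 0 (\<lambda>t. B (\<eta> t)) T z" and t: "t \<in> {0..T}"
    obtain D where D: "\<And>s. (\<eta> has_vector_derivative D s) (at s)" using c unfolding ctrl_def by blast
    have "((\<lambda>s. M j (z s)) has_vector_derivative M j (A (z t) + B (D t))) (at t within {0..T})"
      by (rule lin_vderiv[OF bM lin_sol_deriv[OF A B s D t]])
    then have "M j (A (z t) + B (D t)) = 0"
      by (rule zero_deriv[OF T t]) (use Pj c s in \<open>auto simp: P_def\<close>)
    then have "M j (A (z t)) = 0" using PQ[OF Pj, of "D t"] by (simp add: linear_add[OF bounded_linear.linear[OF bM]])
    moreover have "(A ^^ Suc j) (z t) = (A ^^ j) (A (z t))" by (simp only: funpow_Suc_right o_apply)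
    ultimately show "M (Suc j) (z t) = 0" by (simp only: M_def)
  qed
  have Pall: "P j" for j by (induction j) (auto intro: P0 PS)
  have "\<forall>j w. p \<bullet> (A ^^ j) (B w) = 0" using PQ[OF Pall] by (simp add: M_def)
  then have "p = 0" by (rule K)
  with p0 show False by simp
qed

lemma linsol_zero:
  assumes A: "linear A" and B: "linear B"
  shows "sol A 0 (\<lambda>t. B 0) T (\<lambda>s. 0)"
  unfolding sol_def by (simp add: linear_0[OF A] linear_0[OF B])

lemma linsol_add:
  fixes A :: "'a::euclidean_space \<Rightarrow> 'a" and B :: "'b::euclidean_space \<Rightarrow> 'a"
  assumes A: "linear A" and B: "linear B"
    and s1: "sol A 0 (\<lambda>t. B (\<eta>1 t)) T z1" and s2: "sol A 0 (\<lambda>t. B (\<eta>2 t)) T z2"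
  shows "sol A 0 (\<lambda>t. B (\<eta>1 t + \<eta>2 t)) T (\<lambda>s. z1 s + z2 s)"
  unfolding sol_def
proof (intro conjI ballI)
  have cA1: "continuous_on {0..T} (\<lambda>s. A (z1 s))"
    by (rule lincomp[OF A]) (use s1 in \<open>simp add: sol_def\<close>)
  have cA2: "continuous_on {0..T} (\<lambda>s. A (z2 s))"
    by (rule lincomp[OF A]) (use s2 in \<open>simp add: sol_def\<close>)
  show "continuous_on {0..T} (\<lambda>s. z1 s + z2 s)" using s1 s2 by (auto simp: sol_def intro!: continuous_intros)
  fix t assume t: "t \<in> {0..T}"
  have "integral {0..t} (\<lambda>s. A (z1 s + z2 s)) = integral {0..t} (\<lambda>s. A (z1 s)) + integral {0..t} (\<lambda>s. A (z2 s))"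
    using integral_add[OF cont_integrable[OF cA1 t] cont_integrable[OF cA2 t]] by (simp add: linear_add[OF A])
  then show "z1 t + z2 t = 0 + integral {0..t} (\<lambda>s. A (z1 s + z2 s)) + B (\<eta>1 t + \<eta>2 t)"
    using s1 s2 t by (simp add: sol_def linear_add[OF B])
qed

lemma linsol_scale:
  fixes A :: "'a::euclidean_space \<Rightarrow> 'a" and B :: "'b::euclidean_space \<Rightarrow> 'a"
  assumes A: "linear A" and B: "linear B"
    and s1: "sol A 0 (\<lambda>t. B (\<eta>1 t)) T z1"
  shows "sol A 0 (\<lambda>t. B (c *\<^sub>R \<eta>1 t)) T (\<lambda>s. c *\<^sub>R z1 s)"
  unfolding sol_def
proof (intro conjI ballI)
  show "continuous_on {0..T} (\<lambda>s. c *\<^sub>R z1 s)" using s1 by (auto simp: sol_def intro!: continuous_intros)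
  fix t assume t: "t \<in> {0..T}"
  have "integral {0..t} (\<lambda>s. A (c *\<^sub>R z1 s)) = c *\<^sub>R integral {0..t} (\<lambda>s. A (z1 s))"
    by (simp add: linear_scale[OF A])
  then show "c *\<^sub>R z1 t = 0 + integral {0..t} (\<lambda>s. A (c *\<^sub>R z1 s)) + B (c *\<^sub>R \<eta>1 t)"
    using s1 t by (simp add: sol_def linear_scale[OF B] scaleR_add_right)
qed

lemma linsol_sum:
  fixes A :: "'a::euclidean_space \<Rightarrow> 'a" and B :: "'b::euclidean_space \<Rightarrow> 'a"
  assumes A: "linear A" and B: "linear B" and I: "finite I"
    and s: "\<And>i. i \<in> I \<Longrightarrow> sol A 0 (\<lambda>t. B (\<eta> i t)) T (z i)"
  shows "sol A 0 (\<lambda>t. B (\<Sum>i\<in>I. c i *\<^sub>R \<eta> i t)) T (\<lambda>s. \<Sum>i\<in>I. c i *\<^sub>R z i s)"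
  using I s
proof (induction I rule: finite_induct)
  case empty
  then show ?case using linsol_zero[OF A B] by simp
next
  case (insert i I)
  have "sol A 0 (\<lambda>t. B (c i *\<^sub>R \<eta> i t + (\<Sum>i\<in>I. c i *\<^sub>R \<eta> i t))) T (\<lambda>s. c i *\<^sub>R z i s + (\<Sum>i\<in>I. c i *\<^sub>R z i s))"
    by (rule linsol_add[OF A B linsol_scale[OF A B]]) (use insert in auto)
  then show ?case using insert by simp
qed

lemma ctrl_zero: "ctrl (\<lambda>s. 0)"
  unfolding ctrl_def by (intro conjI exI[of _ "\<lambda>s. 0"]) auto

lemma ctrl_sum:
  assumes I: "finite I" and c: "\<And>i. i \<in> I \<Longrightarrow> ctrl (\<eta> i)"
  shows "ctrl (\<lambda>s. \<Sum>i\<in>I. c i *\<^sub>R \<eta> i s)"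
  using I c
proof (induction I rule: finite_induct)
  case empty
  then show ?case using ctrl_zero by simp
next
  case (insert i I)
  have "ctrl (\<lambda>s. c i *\<^sub>R \<eta> i s + (\<Sum>i\<in>I. c i *\<^sub>R \<eta> i s))"
    by (rule ctrl_add[OF ctrl_scale]) (use insert in auto)
  then show ?case using insert by simp
qed

lemma lip_add:
  fixes f g :: "'a::metric_space \<Rightarrow> 'b::real_normed_vector"
  assumes "K1-lipschitz_on UNIV f" "K2-lipschitz_on UNIV g"
  shows "(K1+K2)-lipschitz_on UNIV (\<lambda>x. f x + g x)"
proof (rule lipschitz_onI)
  fix x y
  have "dist (f x + g x) (f y + g y) \<le> dist (f x) (f y) + dist (g x) (g y)"
    by (rule dist_triangle_add)
  also have "\<dots> \<le> K1 * dist x y + K2 * dist x y"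
    using lipschitz_onD[OF assms(1), of x y] lipschitz_onD[OF assms(2), of x y] by simp
  finally show "dist (f x + g x) (f y + g y) \<le> (K1 + K2) * dist x y" by (simp add: distrib_right)
  show "0 \<le> K1 + K2" using lipschitz_on_nonneg[OF assms(1)] lipschitz_on_nonneg[OF assms(2)] by simp
qed

lemma sum_bound:
  fixes B :: "'b::euclidean_space \<Rightarrow> 'a::euclidean_space" and c :: "real^'k"
  assumes B: "linear B" and M: "\<And>k. norm (B (\<eta> k)) \<le> Mk k"
  shows "norm (B (\<Sum>k\<in>UNIV. c$k *\<^sub>R \<eta> k)) \<le> norm c * (\<Sum>k\<in>UNIV. Mk k)"
proof -
  have "B (\<Sum>k\<in>UNIV. c$k *\<^sub>R \<eta> k) = (\<Sum>k\<in>UNIV. c$k *\<^sub>R B (\<eta> k))"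
    by (simp add: linear_sum[OF B] linear_scale[OF B])
  also have "norm \<dots> \<le> (\<Sum>k\<in>UNIV. norm (c$k *\<^sub>R B (\<eta> k)))" by (rule norm_sum)
  also have "\<dots> \<le> (\<Sum>k\<in>UNIV. norm c * Mk k)"
  proof (rule sum_mono)
    fix k
    show "norm (c$k *\<^sub>R B (\<eta> k)) \<le> norm c * Mk k"
      using component_le_norm_cart[of c k] M[of k] by (simp add: mult_mono)
  qed
  finally show ?thesis by (simp add: sum_distrib_left)
qed

lemma R_choice:
  fixes K0 K1 \<alpha> \<beta> R :: real
  assumes "K0 \<ge> 0" "K1 \<ge> 0" "\<alpha> \<ge> 0" "\<beta> \<ge> 0" and R: "R = max 1 (2*K0 + 4*K1^2*(1+\<alpha>+\<beta>))"
  shows "K0 + K1 * sqrt (1+\<alpha>+\<beta>*R) \<le> R"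
proof -
  define c where "c = 1+\<alpha>+\<beta>"
  have R1: "R \<ge> 1" using R by simp
  have c0: "c \<ge> 0" using assms by (simp add: c_def)
  have aR: "\<alpha> \<le> \<alpha>*R" using mult_left_mono[of 1 R \<alpha>] R1 assms(3) by simp
  have "c * R = R + \<alpha>*R + \<beta>*R" by (simp add: c_def algebra_simps)
  then have "1+\<alpha>+\<beta>*R \<le> c * R" using R1 aR by linarith
  then have "K1 * sqrt (1+\<alpha>+\<beta>*R) \<le> K1 * sqrt (c * R)" using assms by (intro mult_left_mono) auto
  also have "K1 * sqrt (c * R) = sqrt (K1^2 * c * R)" using assms by (simp add: real_sqrt_mult)
  also have "\<dots> \<le> sqrt ((R/2)^2)"
  proof (rule real_sqrt_le_mono)
    have "4*K1^2*c \<le> R" using R assms by (simp add: c_def)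
    then have "4*K1^2*c*R \<le> R*R" using R1 by (intro mult_right_mono) auto
    then show "K1^2 * c * R \<le> (R/2)^2" by (simp add: power2_eq_square)
  qed
  also have "\<dots> = R/2" using R1 by simp
  finally have "K1 * sqrt (1+\<alpha>+\<beta>*R) \<le> R/2" .
  moreover have "K0 \<le> R/2"
  proof -
    have nn: "0 \<le> 4*K1^2*(1+\<alpha>+\<beta>)" using assms by simp
    have "2*K0 + 4*K1^2*(1+\<alpha>+\<beta>) \<le> R" unfolding R by (rule max.cobounded2)
    then show ?thesis using nn by linarith
  qed
  ultimately show ?thesis by simp
qed

lemma ctrl_C1: "ctrl \<eta> \<Longrightarrow> C1_0 T \<eta>"
  unfolding ctrl_def C1_0_def
  by (auto intro: has_vector_derivative_at_within continuous_on_subset)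

theorem mainTheorem4:
  fixes A :: "real^'d \<Rightarrow> real^'d" and B :: "real^'n \<Rightarrow> real^'d"
    and F :: "real^'d \<Rightarrow> real^'d" and x0 :: "real^'d"
  assumes "CARD('n) \<le> CARD('d)"
    and "linear A" and "linear B"
    and "smooth_map F" and "globally_lipschitz F"
    and "kalman_condition A B"
    and "growth_condition A B F"
  shows "\<forall>x (\<delta>::real) (T::real). \<delta> > 0 \<longrightarrow> T > 0 \<longrightarrow>
           (\<exists>\<eta> :: real \<Rightarrow> real^'n. C1_0 T \<eta> \<and>
              (\<exists>y. is_solution A B F T x \<eta> y) \<and>
              (\<forall>y. is_solution A B F T x \<eta> y \<longrightarrow> y T \<in> ball x0 (\<delta> / 2)))"
proof (intro allI impI)
  fix x :: "real^'d" and \<delta> T :: real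
  assume \<delta>: "\<delta> > 0" and T: "T > 0"
  have T0: "T \<ge> 0" using T by simp
  have A: "linear A" and B: "linear B" using assms(2,3) .
  obtain Lf where Lf: "Lf-lipschitz_on UNIV F" using assms(5) unfolding globally_lipschitz_def by blast
  obtain KA where KA0: "KA > 0" and KA: "KA-lipschitz_on UNIV A" using lin_lip[OF A] by blast
  define G where "G z = A z + F z" for z
  define LG where "LG = KA + Lf"
  have LGl: "LG-lipschitz_on UNIV G" unfolding G_def LG_def by (rule lip_add[OF KA Lf])
  have LG0: "LG \<ge> 0" using lipschitz_on_nonneg[OF LGl] .
  have isol: "is_solution A B F T x \<eta> y \<longleftrightarrow> sol G x (\<lambda>t. B (\<eta> t)) T y" for \<eta> y
    unfolding is_solution_def sol_def G_def by simp
  obtain a C where a0: "0 \<le> a" and a1: "a < 1/(2*real (dstar A B))"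
    and Cb: "\<And>z. norm (F z) / (1 + norm z) powr a \<le> C"
    using assms(7) unfolding growth_condition_def by blast
  have ah: "a \<le> 1/2"
  proof (cases "dstar A B = 0")
    case True then show ?thesis using a0 a1 by simp
  next
    case False
    then have d1: "real (dstar A B) \<ge> 1" by simp
    have "1/(2*real (dstar A B)) \<le> 1/2"
      by (rule divide_left_mono) (use d1 in auto)
    then show ?thesis using a1 by linarith
  qed
  have C0: "C \<ge> 0" using Cb[of 0] order_trans[OF norm_ge_zero[of "F 0"]] by simp
  have Fb: "norm (F z) \<le> C * sqrt (1 + norm z)" for z
  proof -
    have pos: "(1 + norm z) powr a > 0" by (simp add: add_nonneg_eq_0_iff)
    have 1: "norm (F z) \<le> C * (1 + norm z) powr a" using Cb[of z] pos by (simp add: divide_le_eq)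
    have "(1 + norm z) powr a \<le> (1 + norm z) powr (1/2)" by (rule powr_mono[OF ah]) simp
    also have "\<dots> = sqrt (1 + norm z)" by (rule powr_half_sqrt) simp
    finally have "C * (1 + norm z) powr a \<le> C * sqrt (1 + norm z)" using C0 by (simp add: mult_left_mono)
    then show ?thesis using 1 by linarith
  qed
  have Kal: "p = 0" if h: "\<forall>j w. p \<bullet> (A ^^ j) (B w) = 0" for p :: "real^'d"
  proof -
    have "{(A ^^ j) (B (axis i 1)) | j i. True} \<subseteq> {x. p \<bullet> x = 0}" using h by auto
    then have "span {(A ^^ j) (B (axis i 1)) | j i. True} \<subseteq> {x. p \<bullet> x = 0}"
      by (rule span_minimal) (rule subspace_hyperplane)
    then have "UNIV \<subseteq> {x. p \<bullet> x = 0}" using assms(6) unfolding kalman_condition_def by simp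
    then have "p \<bullet> p = 0" by blast
    then show ?thesis by simp
  qed
  have "\<forall>k::'d. \<exists>ez. ctrl (fst ez) \<and> sol A 0 (\<lambda>t. B (fst ez t)) T (snd ez) \<and> snd ez T = axis k 1"
  proof
    fix k :: 'd
    have "axis k 1 \<in> VT A B T" by (rule VT_full[OF A B T Kal])
    then obtain \<eta> z where "ctrl \<eta>" "sol A 0 (\<lambda>t. B (\<eta> t)) T z" "axis k 1 = z T" unfolding VT_def by blast
    then show "\<exists>ez. ctrl (fst ez) \<and> sol A 0 (\<lambda>t. B (fst ez t)) T (snd ez) \<and> snd ez T = axis k 1"
      by (intro exI[of _ "(\<eta>, z)"]) auto
  qed
  then obtain ez where ez: "\<forall>k. ctrl (fst (ez k)) \<and> sol A 0 (\<lambda>t. B (fst (ez k) t)) T (snd (ez k)) \<and> snd (ez k) T = axis k 1"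
    using choice[of "\<lambda>k ez. ctrl (fst ez) \<and> sol A 0 (\<lambda>t. B (fst ez t)) T (snd ez) \<and> snd ez T = axis k 1"] by blast
  define \<eta>s where "\<eta>s k = fst (ez k)" for k
  define zs where "zs k = snd (ez k)" for k
  have \<eta>s: "ctrl (\<eta>s k)" and zs: "sol A 0 (\<lambda>t. B (\<eta>s k t)) T (zs k)" and zsT: "zs k T = axis k 1" for k
    using ez by (auto simp: \<eta>s_def zs_def)
  have "\<forall>k. \<exists>M. \<forall>t\<in>{0..T}. norm (B (\<eta>s k t)) \<le> M"
  proof
    fix k
    have "continuous_on {0..T} (\<lambda>t. B (\<eta>s k t))" by (rule lincomp[OF B ctrl_cont[OF \<eta>s]])
    then have "bounded ((\<lambda>t. B (\<eta>s k t)) ` {0..T})" by (intro compact_imp_bounded compact_continuous_image) auto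
    then show "\<exists>M. \<forall>t\<in>{0..T}. norm (B (\<eta>s k t)) \<le> M" unfolding bounded_iff by auto
  qed
  then obtain Mk where Mk: "\<forall>k. \<forall>t\<in>{0..T}. norm (B (\<eta>s k t)) \<le> Mk k"
    using choice[of "\<lambda>k M. \<forall>t\<in>{0..T}. norm (B (\<eta>s k t)) \<le> M"] by blast
  define Mb where "Mb = (\<Sum>k\<in>UNIV. Mk k)"
  have Mk0: "Mk k \<ge> 0" for k
  proof -
    have "norm (B (\<eta>s k 0)) \<le> Mk k" using Mk T0 by simp
    then show ?thesis by (rule order_trans[OF norm_ge_zero])
  qed
  have Mb0: "Mb \<ge> 0" unfolding Mb_def by (simp add: sum_nonneg Mk0)
  define \<eta>u where "\<eta>u = (\<lambda>(u::real^'d) s. \<Sum>k\<in>UNIV. u$k *\<^sub>R \<eta>s k s)"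
  define Zu where "Zu = (\<lambda>(u::real^'d) s. \<Sum>k\<in>UNIV. u$k *\<^sub>R zs k s)"
  have ctrlu: "ctrl (\<eta>u u)" for u
    unfolding \<eta>u_def using ctrl_sum[of UNIV \<eta>s "\<lambda>k. u$k"] \<eta>s by simp
  have Zsol: "sol A 0 (\<lambda>t. B (\<eta>u u t)) T (Zu u)" for u
    unfolding \<eta>u_def Zu_def using linsol_sum[OF A B, of UNIV \<eta>s T zs "\<lambda>k. u$k"] zs by simp
  have ZT: "Zu u T = u" for u
    unfolding Zu_def using basis_expansion[of u] by (simp add: zsT scalar_mult_eq_scaleR)
  have Bbound: "norm (B (\<eta>u u t) - B (\<eta>u v t)) \<le> norm (u - v) * Mb" if t: "t \<in> {0..T}" for u v t
  proof -
    have "B (\<eta>u u t) - B (\<eta>u v t) = B (\<Sum>k\<in>UNIV. (u - v)$k *\<^sub>R \<eta>s k t)"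
      unfolding \<eta>u_def by (simp add: linear_diff[OF B, symmetric] scaleR_diff_left sum_subtractf)
    also have "norm \<dots> \<le> norm (u - v) * (\<Sum>k\<in>UNIV. Mk k)"
      by (rule sum_bound[OF B]) (use Mk t in auto)
    finally show ?thesis by (simp add: Mb_def)
  qed
  have Bbound0: "norm (B (\<eta>u u t)) \<le> norm u * Mb" if t: "t \<in> {0..T}" for u t
  proof -
    have "\<eta>u 0 t = 0" by (simp add: \<eta>u_def)
    then show ?thesis using Bbound[OF t, of u 0] linear_0[OF B] by simp
  qed
  have hu: "continuous_on {0..T} (\<lambda>t. B (\<eta>u u t))" for u by (rule lincomp[OF B ctrl_cont[OF ctrlu]])
  obtain Y0 where Y0: "sol A x (\<lambda>t. 0) T Y0" using sol_exists[OF KA _ T0, of "\<lambda>t. 0" x] by auto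
  define yu where "yu u = (SOME y. sol G x (\<lambda>t. B (\<eta>u u t)) T y)" for u
  have yu: "sol G x (\<lambda>t. B (\<eta>u u t)) T (yu u)" for u
    unfolding yu_def by (rule someI_ex[OF sol_exists[OF LGl hu T0]])
  define E1 where "E1 = exp (2*(LG+1)*T)"
  define E2 where "E2 = exp (2*(KA+1)*T)"
  have E10: "E1 > 0" and E20: "E2 > 0" by (auto simp: E1_def E2_def)
  have ylip: "norm (yu u T - yu v T) \<le> norm (u - v) * Mb * E1" for u v
  proof -
    have "norm (yu u T - yu v T) \<le> (norm (u - v) * Mb) * exp (2*(LG+1)*T)"
      by (rule sol_diff_bound[OF LGl yu yu]) (use Bbound Mb0 T0 in auto)
    then show ?thesis by (simp add: E1_def)
  qed
  define \<alpha> where "\<alpha> = (norm x + T * norm (G 0)) * E1"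
  define \<beta> where "\<beta> = Mb * E1"
  have \<alpha>0: "\<alpha> \<ge> 0" and \<beta>0: "\<beta> \<ge> 0" using E10 Mb0 T0 by (auto simp: \<alpha>_def \<beta>_def)
  have ybound: "norm (yu u s) \<le> \<alpha> + \<beta> * norm u" if s: "s \<in> {0..T}" for u s
  proof -
    have "norm (yu u s) \<le> (norm x + norm u * Mb + T * norm (G 0)) * exp (2*(LG+1)*T)"
      by (rule sol_norm_bound[OF LGl yu _ s]) (use Bbound0 in auto)
    then show ?thesis by (simp add: \<alpha>_def \<beta>_def E1_def algebra_simps)
  qed
  define K0 where "K0 = norm x0 + norm (Y0 T)"
  define K1 where "K1 = T * C * E2"
  have K00: "K0 \<ge> 0" and K10: "K1 \<ge> 0" using T0 C0 E20 by (auto simp: K0_def K1_def)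
  have wbound: "norm (yu u T - Y0 T - u) \<le> K1 * sqrt (1 + \<alpha> + \<beta> * R)" if uR: "norm u \<le> R" for u R
  proof -
    define Fbd where "Fbd = C * sqrt (1 + \<alpha> + \<beta> * R)"
    have cy: "continuous_on {0..T} (yu u)" using yu by (simp add: sol_def)
    have cY: "continuous_on {0..T} Y0" using Y0 by (simp add: sol_def)
    have cZ: "continuous_on {0..T} (Zu u)" using Zsol by (simp add: sol_def)
    have cF: "continuous_on {0..T} (\<lambda>s. F (yu u s))"
      by (rule continuous_on_compose2[OF lip_cont[OF Lf] cy subset_UNIV])
    have cAy: "continuous_on {0..T} (\<lambda>s. A (yu u s))" by (rule lincomp[OF A cy])
    have cAY: "continuous_on {0..T} (\<lambda>s. A (Y0 s))" by (rule lincomp[OF A cY])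
    have cAZ: "continuous_on {0..T} (\<lambda>s. A (Zu u s))" by (rule lincomp[OF A cZ])
    define w where "w s = yu u s - Y0 s - Zu u s" for s
    have wsol: "sol A 0 (\<lambda>t. integral {0..t} (\<lambda>s. F (yu u s))) T w"
      unfolding sol_def
    proof (intro conjI ballI)
      show "continuous_on {0..T} w" unfolding w_def by (intro continuous_intros cy cY cZ)
      fix t assume t: "t \<in> {0..T}"
      have e1: "yu u t = x + integral {0..t} (\<lambda>s. A (yu u s) + F (yu u s)) + B (\<eta>u u t)"
        using yu[of u] t unfolding sol_def G_def by blast
      have e2: "Y0 t = x + integral {0..t} (\<lambda>s. A (Y0 s)) + 0"
        using Y0 t unfolding sol_def by blast
      have e3: "Zu u t = 0 + integral {0..t} (\<lambda>s. A (Zu u s)) + B (\<eta>u u t)"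
        using Zsol[of u] t unfolding sol_def by blast
      have wt: "w t = yu u t - Y0 t - Zu u t" by (simp add: w_def)
      have i1: "integral {0..t} (\<lambda>s. A (yu u s) + F (yu u s)) = integral {0..t} (\<lambda>s. A (yu u s)) + integral {0..t} (\<lambda>s. F (yu u s))"
        by (rule integral_add[OF cont_integrable[OF cAy t] cont_integrable[OF cF t]])
      have "integral {0..t} (\<lambda>s. A (w s)) = integral {0..t} (\<lambda>s. (A (yu u s) - A (Y0 s)) - A (Zu u s))"
        by (simp add: w_def linear_diff[OF A])
      also have "\<dots> = integral {0..t} (\<lambda>s. A (yu u s) - A (Y0 s)) - integral {0..t} (\<lambda>s. A (Zu u s))"
        by (rule integral_diff[OF integrable_diff[OF cont_integrable[OF cAy t] cont_integrable[OF cAY t]] cont_integrable[OF cAZ t]])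
      also have "integral {0..t} (\<lambda>s. A (yu u s) - A (Y0 s)) = integral {0..t} (\<lambda>s. A (yu u s)) - integral {0..t} (\<lambda>s. A (Y0 s))"
        by (rule integral_diff[OF cont_integrable[OF cAy t] cont_integrable[OF cAY t]])
      finally have i2: "integral {0..t} (\<lambda>s. A (w s)) = integral {0..t} (\<lambda>s. A (yu u s)) - integral {0..t} (\<lambda>s. A (Y0 s)) - integral {0..t} (\<lambda>s. A (Zu u s))" .
      show "w t = 0 + integral {0..t} (\<lambda>s. A (w s)) + integral {0..t} (\<lambda>s. F (yu u s))"
        unfolding i2 wt using e1 e2 e3 i1 by (simp add: algebra_simps)
    qed
    have Fy: "norm (F (yu u s)) \<le> Fbd" if s: "s \<in> {0..T}" for s
    proof -
      have "norm (F (yu u s)) \<le> C * sqrt (1 + norm (yu u s))" by (rule Fb)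
      also have "\<dots> \<le> C * sqrt (1 + \<alpha> + \<beta> * R)"
      proof (intro mult_left_mono C0 real_sqrt_le_mono)
        have "\<beta> * norm u \<le> \<beta> * R" using uR \<beta>0 by (simp add: mult_left_mono)
        then show "1 + norm (yu u s) \<le> 1 + \<alpha> + \<beta> * R" using ybound[OF s, of u] by linarith
      qed
      finally show ?thesis by (simp add: Fbd_def)
    qed
    have Fbd0: "Fbd \<ge> 0"
    proof -
      have "norm (F (yu u 0)) \<le> Fbd" using Fy T0 by simp
      then show ?thesis by (rule order_trans[OF norm_ge_zero])
    qed
    have "norm (w T) \<le> (T * Fbd) * exp (2*(KA+1)*T)"
    proof (rule sol_norm_bound[OF KA wsol])
      fix t assume t: "t \<in> {0..T}"
      have "norm (integral {0..t} (\<lambda>s. F (yu u s))) \<le> integral {0..t} (\<lambda>s. Fbd)"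
        by (rule norm_integral_le[OF cF t]) (use Fy in auto)
      also have "\<dots> = t * Fbd" using t by simp
      also have "\<dots> \<le> T * Fbd" using t Fbd0 by (intro mult_right_mono) auto
      finally show "norm (0::real^'d) + norm (integral {0..t} (\<lambda>s. F (yu u s))) + T * norm (A 0) \<le> T * Fbd"
        by (simp add: linear_0[OF A])
    qed (use T0 in auto)
    moreover have "w T = yu u T - Y0 T - u" by (simp add: w_def ZT)
    ultimately show ?thesis by (simp add: K1_def Fbd_def E2_def mult_ac)
  qed
  define R where "R = max 1 (2*K0 + 4*K1^2*(1+\<alpha>+\<beta>))"
  define \<Phi> where "\<Phi> u = u + x0 - yu u T" for u
  have \<Phi>in: "\<Phi> u \<in> cball 0 R" if "u \<in> cball 0 R" for u
  proof -
    have uR: "norm u \<le> R" using that by simp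
    have e: "\<Phi> u = x0 - Y0 T - (yu u T - Y0 T - u)" by (simp add: \<Phi>_def algebra_simps)
    have "norm (\<Phi> u) \<le> norm x0 + norm (Y0 T) + norm (yu u T - Y0 T - u)"
      unfolding e using norm_triangle_ineq4[of "x0 - Y0 T" "yu u T - Y0 T - u"] norm_triangle_ineq4[of x0 "Y0 T"]
      by linarith
    also have "\<dots> \<le> K0 + K1 * sqrt (1 + \<alpha> + \<beta> * R)" using wbound[OF uR] by (simp add: K0_def)
    also have "\<dots> \<le> R" by (rule R_choice[OF K00 K10 \<alpha>0 \<beta>0 R_def])
    finally show ?thesis by simp
  qed
  have \<Phi>lip: "(1 + Mb * E1)-lipschitz_on (cball 0 R) \<Phi>"
  proof (rule lipschitz_onI)
    fix u v
    have e: "\<Phi> u - \<Phi> v = (u - v) - (yu u T - yu v T)" by (simp add: \<Phi>_def algebra_simps)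
    have "norm (\<Phi> u - \<Phi> v) \<le> norm (u - v) + norm (yu u T - yu v T)"
      unfolding e by (rule norm_triangle_ineq4)
    also have "\<dots> \<le> norm (u - v) + norm (u - v) * Mb * E1" using ylip[of u v] by simp
    finally show "dist (\<Phi> u) (\<Phi> v) \<le> (1 + Mb * E1) * dist u v" by (simp add: dist_norm algebra_simps)
    show "0 \<le> 1 + Mb * E1" using Mb0 E10 by simp
  qed
  have cR: "cball (0::real^'d) R \<noteq> {}" using R_def by simp
  have fim: "\<Phi> \<in> cball 0 R \<rightarrow> cball 0 R" using \<Phi>in by blast
  obtain u where u: "u \<in> cball 0 R" "\<Phi> u = u"
    by (rule brouwer[OF compact_cball convex_cball cR lipschitz_on_continuous_on[OF \<Phi>lip] fim])
  have yT: "yu u T = x0" using u(2) by (simp add: \<Phi>_def)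
  show "\<exists>\<eta> :: real \<Rightarrow> real^'n. C1_0 T \<eta> \<and> (\<exists>y. is_solution A B F T x \<eta> y) \<and>
              (\<forall>y. is_solution A B F T x \<eta> y \<longrightarrow> y T \<in> ball x0 (\<delta> / 2))"
  proof (intro exI[of _ "\<eta>u u"] conjI allI impI)
    show "C1_0 T (\<eta>u u)" by (rule ctrl_C1[OF ctrlu])
    show "\<exists>y. is_solution A B F T x (\<eta>u u) y" using yu[of u] isol by blast
    fix y assume "is_solution A B F T x (\<eta>u u) y"
    then have "sol G x (\<lambda>t. B (\<eta>u u t)) T y" using isol by blast
    then have "y T = yu u T" by (rule sol_unique[OF LGl _ yu]) (use T0 in auto)
    then show "y T \<in> ball x0 (\<delta> / 2)" using yT \<delta> by simp
  qed
qed


end
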